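(* Consider the recursive multi-rooted algorithm $\mathrm{DST}(I,\widetilde{\mathrm{opt}})$ described in the context, applied to a planar \textsc{Multi-Rooted Directed Steiner Tree} instance $I=(G=(V,E),c,\{r_1,\dots,r_R\},X)$ with positive integer edge costs. Let $\ell$ and $o$ be non-negative integers with $|X|\le 2^{\ell}$ and $\widetilde{\mathrm{opt}}\le 2^{o}$. If $\widetilde{\mathrm{opt}}\ge\mathrm{opt}$, where $\mathrm{opt}$ is the optimal value of $I$, then $\mathrm{DST}(I,\widetilde{\mathrm{opt}})$ returns a feasible solution of cost at most $(8(R+\ell)+1)\cdot\mathrm{opt}$, and the number of recursive calls is at most $|X|\cdot 2^{2\ell+o}$.
   Context: MR-DST: digraph $G=(V,E)$ (parallel edges allowed, planar underlying undirected graph) with positive integer costs $c_e$, roots $r_1,\dots,r_R$, terminals $X\subseteq V\setminus\{r_1,\dots,r_R\}$; feasible $F\subseteq E$: every terminal reachable from some root via $F$; cost $\sum_{e\in F}c_e$; $\mathrm{opt}$ the minimum cost. $d(\{r_1,\dots,r_R\},v)=\min_j d(r_j,v)$ (shortest-path distances). $A_1,\dots,A_R$: vertex-disjoint shortest-path arborescences rooted at $r_1,\dots,r_R$ such that for $v\in V(A_i)$ the $r_i$–$v$ path in $A_i$ has cost $d(\{r_1,\dots,r_R\},v)$ (obtained from a shortest-path arborescence from an auxiliary vertex joined to all roots by zero-cost edges). A multi-rooted partial arborescence is $T=F\cup\bigcup_j T_{j}$ with $T_j$ vertex-disjoint partial arborescences (directed trees oriented away from their root) rooted at roots $r_j$,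 $F$ a set of edges not in any $T_j$ with endpoints in $\bigcup_j V(T_j)$, $T$ weakly connected and acyclic in the undirected sense. Induced subinstances for components $C_1,\dots,C_h$ of $G\setminus T$: contract $T$ into a new vertex $r_T$ (edges inherit costs), $I_{C_i}=(G_{\mathrm{contract}}[C_i\cup\{r_T\}],c,\{r_T\}\cup(\text{roots in }C_i),C_i\cap X)$. Algorithm $\mathrm{DST}(I,\widetilde{\mathrm{opt}})$: (1) if $\widetilde{\mathrm{opt}}<1$ or $d(\{r_1,\dots,r_R\},t)>\widetilde{\mathrm{opt}}$ for some $t\in X$, return infeasible; (2) else if $|X|=1$, return a shortest directed path from the root set to the terminal; (3) otherwise let $\mathcal F_1=\mathrm{DST}(I,\widetilde{\mathrm{opt}}/2)$ (cost $\infty$ if infeasible); remove all vertices $v$ with $d(\{r_1,\dots,r_R\},v)>\widetilde{\mathrm{opt}}$; compute a multi-rooted partial arborescence $T=F\cup\bigcup_{j=1}^R T_j$ in which each $T_j$ is empty or a subtree of $A_j$ rooted at $r_j$ that is the union of up to four shortest directed paths starting at $r_j$, and such that each weakly connected component $C_i$ of $G\setminus T$ contains at most $|X|/2$ terminals; let $\mathcal F'_i=\mathrm{DST}(I_{C_i},\widetilde{\mathrm{opt}})$ and $\mathcal F_2$ the edges of $G$ corresponding to $(E(T)\setminus F)\cup\bigcup_i\mathcal F'_i$ (cost $\infty$ if some $\mathcal F'_i$ is infeasible); return infeasible if both costs are $\infty$, else the cheaper of $\mathcal F_1,\mathcal F_2$. *)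

theory Defs
  imports "HOL-Analysis.Analysis" "HOL-Library.Extended_Real" "HOL-Library.Extended_Nat"
begin

text \<open>A digraph with parallel edges: vertices of type 'v, edges of type 'e, each edge
  has a tail and a head. Costs are natural numbers (positivity is part of well-formedness).\<close>

record ('v, 'e) inst =
  iV :: "'v set"
  iE :: "'e set"
  tail :: "'e \<Rightarrow> 'v"
  head :: "'e \<Rightarrow> 'v"
  cost :: "'e \<Rightarrow> nat"
  roots :: "'v set"
  terms :: "'v set"

definition wf_inst :: "('v, 'e) inst \<Rightarrow> bool" where
  "wf_inst I \<longleftrightarrow> finite (iV I) \<and> finite (iE I)
     \<and> (\<forall>e\<in>iE I. tail I e \<in> iV I \<and> head I e \<in> iV I)
     \<and> (\<forall>e\<in>iE I. cost I e > 0)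
     \<and> roots I \<subseteq> iV I \<and> terms I \<subseteq> iV I - roots I"

text \<open>Planarity of the underlying undirected (multi)graph: an embedding into the plane
  with vertices mapped to distinct points and every non-loop edge drawn as an arc between
  its endpoints, arcs not passing through other vertices and pairwise meeting only in
  common endpoints. (Loops never affect planarity.)\<close>

definition planar_inst :: "('v, 'e) inst \<Rightarrow> bool" where
  "planar_inst I \<longleftrightarrow> (\<exists>(pos :: 'v \<Rightarrow> complex) (\<gamma> :: 'e \<Rightarrow> real \<Rightarrow> complex).
     inj_on pos (iV I)
     \<and> (\<forall>e\<in>iE I. tail I e \<noteq> head I e \<longrightarrow>
          arc (\<gamma> e) \<and> pathstart (\<gamma> e) = pos (tail I e) \<and> pathfinish (\<gamma> e) = pos (head I e)
          \<and> path_image (\<gamma> e) \<inter> pos ` iV I = {pos (tail I e), pos (head I e)})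
     \<and> (\<forall>e\<in>iE I. \<forall>e'\<in>iE I. e \<noteq> e' \<longrightarrow> tail I e \<noteq> head I e \<longrightarrow> tail I e' \<noteq> head I e' \<longrightarrow>
          path_image (\<gamma> e) \<inter> path_image (\<gamma> e') \<subseteq> pos ` {tail I e, head I e}))"

fun walk :: "('e \<Rightarrow> 'v) \<Rightarrow> ('e \<Rightarrow> 'v) \<Rightarrow> 'e set \<Rightarrow> 'v \<Rightarrow> 'e list \<Rightarrow> 'v \<Rightarrow> bool" where
  "walk ta he S u [] v \<longleftrightarrow> u = v"
| "walk ta he S u (e # es) v \<longleftrightarrow> e \<in> S \<and> ta e = u \<and> walk ta he S (he e) es v"

definition pcost :: "('v, 'e) inst \<Rightarrow> 'e list \<Rightarrow> nat" where
  "pcost I p = sum_list (map (cost I) p)"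

definition setcost :: "('v, 'e) inst \<Rightarrow> 'e set \<Rightarrow> nat" where
  "setcost I F = (\<Sum>e\<in>F. cost I e)"

text \<open>Shortest-path distance from the vertex set S to v (infinite if unreachable).\<close>
definition dist :: "('v, 'e) inst \<Rightarrow> 'v set \<Rightarrow> 'v \<Rightarrow> ereal" where
  "dist I S v = Inf {ereal (real (pcost I p)) | r p. r \<in> S \<and> walk (tail I) (head I) (iE I) r p v}"

definition feasible :: "('v, 'e) inst \<Rightarrow> 'e set \<Rightarrow> bool" where
  "feasible I F \<longleftrightarrow> F \<subseteq> iE I \<and>
     (\<forall>t\<in>terms I. \<exists>r\<in>roots I. \<exists>p. walk (tail I) (head I) F r p t)"

definition optv :: "('v, 'e) inst \<Rightarrow> nat" where
  "optv I = Min (setcost I ` {F. feasible I F})"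

definition uedges :: "('e \<Rightarrow> 'v) \<Rightarrow> ('e \<Rightarrow> 'v) \<Rightarrow> 'e set \<Rightarrow> ('v \<times> 'v) set" where
  "uedges ta he S = {(ta e, he e) | e. e \<in> S} \<union> {(he e, ta e) | e. e \<in> S}"

text \<open>An undirected cycle in the edge set S (parallel edges form cycles of length 2,
  loops cycles of length 1).\<close>
definition has_ucycle :: "('e \<Rightarrow> 'v) \<Rightarrow> ('e \<Rightarrow> 'v) \<Rightarrow> 'e set \<Rightarrow> bool" where
  "has_ucycle ta he S \<longleftrightarrow> (\<exists>es vs. es \<noteq> [] \<and> distinct es \<and> set es \<subseteq> S
      \<and> length vs = length es \<and> distinct vs
      \<and> (\<forall>i<length es. {ta (es ! i), he (es ! i)} = {vs ! i, vs ! ((i + 1) mod length es)}))"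

definition inner_edges :: "('v, 'e) inst \<Rightarrow> 'v set \<Rightarrow> 'e set" where
  "inner_edges I W = {e \<in> iE I. tail I e \<in> W \<and> head I e \<in> W}"

definition comps :: "('v, 'e) inst \<Rightarrow> 'v set \<Rightarrow> 'v set set" where
  "comps I W = {{v \<in> W. (u, v) \<in> (uedges (tail I) (head I) (inner_edges I W))\<^sup>*} | u. u \<in> W}"

definition restrict_dist :: "('v, 'e) inst \<Rightarrow> real \<Rightarrow> ('v, 'e) inst" where
  "restrict_dist I x = (let W = {v \<in> iV I. dist I (roots I) v \<le> ereal x} in
     I\<lparr> iV := W, iE := inner_edges I W, roots := roots I \<inter> W, terms := terms I \<inter> W \<rparr>)"

text \<open>Induced subinstance for component C: the vertex set Vt of the partial arborescence
  is contracted into the new vertex rT (a vertex name not in C).\<close>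
definition contract_sub :: "('v, 'e) inst \<Rightarrow> 'v set \<Rightarrow> 'v set \<Rightarrow> 'v \<Rightarrow> ('v, 'e) inst" where
  "contract_sub I Vt C rT =
     \<lparr> iV = C \<union> {rT},
       iE = {e \<in> iE I. tail I e \<in> C \<union> Vt \<and> head I e \<in> C \<union> Vt},
       tail = (\<lambda>e. if tail I e \<in> Vt then rT else tail I e),
       head = (\<lambda>e. if head I e \<in> Vt then rT else head I e),
       cost = cost I,
       roots = {rT} \<union> (roots I \<inter> C),
       terms = terms I \<inter> C \<rparr>"

definition arb_verts :: "('v, 'e) inst \<Rightarrow> 'e set \<Rightarrow> 'v \<Rightarrow> 'v set" where
  "arb_verts I A r = insert r (head I ` A)"

definition sp_arborescences :: "('v, 'e) inst \<Rightarrow> ('v \<Rightarrow> 'e set) \<Rightarrow> bool" where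
  "sp_arborescences I A \<longleftrightarrow>
     (\<forall>r\<in>roots I. A r \<subseteq> iE I
        \<and> (\<forall>e\<in>A r. head I e \<noteq> r \<and> tail I e \<in> arb_verts I (A r) r)
        \<and> (\<forall>v\<in>arb_verts I (A r) r - {r}. \<exists>!e. e \<in> A r \<and> head I e = v)
        \<and> (\<forall>v\<in>arb_verts I (A r) r. \<exists>p. walk (tail I) (head I) (A r) r p v
                \<and> ereal (real (pcost I p)) = dist I (roots I) v))
   \<and> (\<forall>r\<in>roots I. \<forall>r'\<in>roots I. r \<noteq> r' \<longrightarrow> arb_verts I (A r) r \<inter> arb_verts I (A r') r' = {})
   \<and> (\<Union>r\<in>roots I. arb_verts I (A r) r)
       = {v \<in> iV I. \<exists>r\<in>roots I. \<exists>p. walk (tail I) (head I) (iE I) r p v}"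

text \<open>T_r is the union of the paths in A r from r given by the (at most four) walks P r;
  it is empty iff P r is empty.\<close>
definition T_edges :: "('v \<Rightarrow> 'e list set) \<Rightarrow> 'v \<Rightarrow> 'e set" where
  "T_edges P r = (\<Union>p\<in>P r. set p)"

definition T_verts :: "('v, 'e) inst \<Rightarrow> ('v \<Rightarrow> 'e list set) \<Rightarrow> 'v \<Rightarrow> 'v set" where
  "T_verts I P r = (if P r = {} then {} else insert r (head I ` T_edges P r))"

text \<open>The multi-rooted partial arborescence T = F \<union> \<Union>_r T_r, with the separation property:
  every weakly connected component of the remaining graph has at most |X|/2 terminals.\<close>
definition good_separator :: "('v, 'e) inst \<Rightarrow> ('v \<Rightarrow> 'e set) \<Rightarrow> ('v \<Rightarrow> 'e list set) \<Rightarrow> 'e set \<Rightarrow> bool" where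
  "good_separator I A P F \<longleftrightarrow>
     (let Te = (\<Union>r\<in>roots I. T_edges P r); Vt = (\<Union>r\<in>roots I. T_verts I P r) in
       (\<forall>r\<in>roots I. finite (P r) \<and> card (P r) \<le> 4
           \<and> (\<forall>p\<in>P r. \<exists>v. walk (tail I) (head I) (A r) r p v))
       \<and> F \<subseteq> iE I \<and> F \<inter> Te = {}
       \<and> (\<forall>e\<in>F. tail I e \<in> Vt \<and> head I e \<in> Vt)
       \<and> (\<forall>u\<in>Vt. \<forall>v\<in>Vt. (u, v) \<in> (uedges (tail I) (head I) (F \<union> Te))\<^sup>*)
       \<and> \<not> has_ucycle (tail I) (head I) (F \<union> Te)
       \<and> (\<forall>C\<in>comps I (iV I - Vt). 2 * card (C \<inter> terms I) \<le> card (terms I)))"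

text \<open>Cost of a possibly infeasible result (None = infeasible, cost \<infinity>).\<close>
definition ocost :: "('v, 'e) inst \<Rightarrow> 'e set option \<Rightarrow> enat" where
  "ocost I r = (case r of None \<Rightarrow> \<infinity> | Some F \<Rightarrow> enat (setcost I F))"

text \<open>dst_run I x res n: some execution of DST(I, x) (over all admissible choices of shortest
  paths, arborescences, separators and names of contracted vertices) returns res
  (None = infeasible) and makes n calls in total (counting this call itself).\<close>

inductive dst_run :: "('v, 'e) inst \<Rightarrow> real \<Rightarrow> 'e set option \<Rightarrow> nat \<Rightarrow> bool" where
  infeas: "x < 1 \<or> (\<exists>t\<in>terms I. dist I (roots I) t > ereal x) \<Longrightarrow> dst_run I x None 1"
| single: "\<not> x < 1 \<Longrightarrow> (\<forall>t\<in>terms I. dist I (roots I) t \<le> ereal x) \<Longrightarrow> terms I = {t} \<Longrightarrow>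
     r \<in> roots I \<Longrightarrow> walk (tail I) (head I) (iE I) r p t \<Longrightarrow>
     (\<forall>r'\<in>roots I. \<forall>q. walk (tail I) (head I) (iE I) r' q t \<longrightarrow> pcost I p \<le> pcost I q) \<Longrightarrow>
     dst_run I x (Some (set p)) 1"
| recur: "\<not> x < 1 \<Longrightarrow> (\<forall>t\<in>terms I. dist I (roots I) t \<le> ereal x) \<Longrightarrow> card (terms I) \<noteq> 1 \<Longrightarrow>
     dst_run I (x / 2) res1 n1 \<Longrightarrow>
     I' = restrict_dist I x \<Longrightarrow>
     sp_arborescences I' A \<Longrightarrow>
     good_separator I' A P F \<Longrightarrow>
     Te = (\<Union>r\<in>roots I'. T_edges P r) \<Longrightarrow>
     Vt = (\<Union>r\<in>roots I'. T_verts I' P r) \<Longrightarrow>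
     Cs = {C \<in> comps I' (iV I' - Vt). C \<inter> terms I' \<noteq> {}} \<Longrightarrow>
     (\<forall>C\<in>Cs. rT C \<notin> C \<and> dst_run (contract_sub I' Vt C (rT C)) x (resC C) (nC C)) \<Longrightarrow>
     res2 = (if (\<forall>C\<in>Cs. resC C \<noteq> None) then Some (Te \<union> (\<Union>C\<in>Cs. the (resC C))) else None) \<Longrightarrow>
     (res = res1 \<or> res = res2) \<Longrightarrow> ocost I res \<le> ocost I res1 \<Longrightarrow> ocost I res \<le> ocost I res2 \<Longrightarrow>
     dst_run I x res (1 + n1 + (\<Sum>C\<in>Cs. nC C))"

end

theory Submission
  imports Defs
begin

lemma walk_append[simp]:
  "walk ta he S u (p @ q) v \<longleftrightarrow> (\<exists>w. walk ta he S u p w \<and> walk ta he S w q v)"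
  by (induction p arbitrary: u) auto

lemma walk_subset: "walk ta he S u p v \<Longrightarrow> set p \<subseteq> S' \<Longrightarrow> walk ta he S' u p v"
  by (induction p arbitrary: u) auto

lemma walk_set: "walk ta he S u p v \<Longrightarrow> set p \<subseteq> S"
  by (induction p arbitrary: u) auto

lemma walk_distinct:
  "walk ta he S u p v \<Longrightarrow> \<exists>q. walk ta he S u q v \<and> distinct q \<and> set q \<subseteq> set p"
proof (induction "length p" arbitrary: p rule: less_induct)
  case less
  show ?case
  proof (cases "distinct p")
    case True then show ?thesis using less.prems by blast
  next
    case False
    then obtain xs ys zs y where p: "p = xs @ [y] @ ys @ [y] @ zs" using not_distinct_decomp by blast
    have w: "walk ta he S u (xs @ [y] @ zs) v" using less.prems p by auto
    have "length (xs @ [y] @ zs) < length p" using p by simp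
    from less.hyps[OF this w] obtain q where "walk ta he S u q v \<and> distinct q \<and> set q \<subseteq> set (xs @ [y] @ zs)" by blast
    then show ?thesis using p by auto
  qed
qed

lemma sum_set_le_sum_list: "sum (f::'a \<Rightarrow> nat) (set xs) \<le> sum_list (map f xs)"
  by (induction xs) (auto simp: sum.insert_if)

lemma sum_Union_le_nat:
  assumes "finite A" "\<forall>a\<in>A. finite a"
  shows "sum (f::'a \<Rightarrow> nat) (\<Union>A) \<le> (\<Sum>a\<in>A. sum f a)"
  using assms
proof (induction A rule: finite_induct)
  case empty then show ?case by simp
next
  case (insert a A)
  have "sum f (\<Union>(insert a A)) = sum f (a \<union> \<Union>A)" by simp
  also have "\<dots> \<le> sum f a + sum f (\<Union>A)"
    using insert by (simp add: sum_Un_nat)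
  also have "\<dots> \<le> sum f a + (\<Sum>a\<in>A. sum f a)" using insert by simp
  finally show ?case using insert by simp
qed

lemma walk_end: "walk ta he S u p v \<Longrightarrow> v = u \<or> v \<in> he ` set p"
  by (induction p arbitrary: u) auto

lemma walk_tails: "walk ta he S u p v \<Longrightarrow> e \<in> set p \<Longrightarrow> ta e = u \<or> ta e \<in> he ` set p"
  by (induction p arbitrary: u) auto

lemma walk_unique:
  assumes "walk ta he S r p v" "walk ta he S r q v"
    and "\<forall>e\<in>S. he e \<noteq> r" and "\<forall>e\<in>S. \<forall>e'\<in>S. he e = he e' \<longrightarrow> e = e'"
  shows "p = q"
  using assms(1,2)
proof (induction p arbitrary: q v rule: rev_induct)
  case Nil
  then have "v = r" by simp
  show ?case
  proof (cases q rule: rev_cases)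
    case Nil then show ?thesis by simp
  next
    case (snoc q' e) then show ?thesis using Nil.prems \<open>v = r\<close> assms(3) by auto
  qed
next
  case (snoc e p)
  then have e: "e \<in> S" "he e = v" "walk ta he S r p (ta e)" by auto
  show ?case
  proof (cases q rule: rev_cases)
    case Nil then show ?thesis using snoc.prems e assms(3) by auto
  next
    case (snoc q' e')
    then have e': "e' \<in> S" "he e' = v" "walk ta he S r q' (ta e')" using snoc.prems(2) by auto
    then have "e = e'" using e assms(4) by metis
    then show ?thesis using snoc.IH e e' \<open>q = q' @ [e']\<close> by auto
  qed
qed


lemma pcost_append[simp]: "pcost I (p @ q) = pcost I p + pcost I q"
  by (simp add: pcost_def)
lemma pcost_Cons[simp]: "pcost I (e # q) = cost I e + pcost I q"
  by (simp add: pcost_def)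
lemma pcost_Nil[simp]: "pcost I [] = 0"
  by (simp add: pcost_def)

lemma dist_le:
  "r \<in> S \<Longrightarrow> walk (tail I) (head I) (iE I) r p v \<Longrightarrow> dist I S v \<le> ereal (real (pcost I p))"
  unfolding dist_def by (rule Inf_lower) blast

lemma dist_attained:
  assumes "dist I S v \<le> ereal x"
  shows "\<exists>r p. r \<in> S \<and> walk (tail I) (head I) (iE I) r p v \<and> dist I S v = ereal (real (pcost I p))"
proof -
  define N where "N = {pcost I p | r p. r \<in> S \<and> walk (tail I) (head I) (iE I) r p v}"
  have "N \<noteq> {}"
  proof
    assume "N = {}"
    then have "{ereal (real (pcost I p)) | r p. r \<in> S \<and> walk (tail I) (head I) (iE I) r p v} = {}"
      unfolding N_def by blast
    then have "dist I S v = Inf ({}::ereal set)" unfolding dist_def by (simp only:)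
    then have "dist I S v = \<infinity>" by (simp add: top_ereal_def)
    then show False using assms by simp
  qed
  then obtain n where "n \<in> N" by blast
  define m where "m = (LEAST n. n \<in> N)"
  have mN: "m \<in> N" unfolding m_def by (rule LeastI) fact
  then obtain r p where rp: "r \<in> S" "walk (tail I) (head I) (iE I) r p v" "m = pcost I p"
    unfolding N_def by blast
  have "dist I S v = ereal (real m)"
  proof (rule antisym)
    show "dist I S v \<le> ereal (real m)" using dist_le[OF rp(1,2)] rp(3) by simp
    show "ereal (real m) \<le> dist I S v"
      unfolding dist_def
    proof (rule Inf_greatest)
      fix y assume "y \<in> {ereal (real (pcost I p)) | r p. r \<in> S \<and> walk (tail I) (head I) (iE I) r p v}"
      then obtain r' p' where "y = ereal (real (pcost I p'))" "r' \<in> S" "walk (tail I) (head I) (iE I) r' p' v" by blast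
      moreover have "m \<le> pcost I p'" unfolding m_def by (rule Least_le) (use calculation N_def in blast)
      ultimately show "ereal (real m) \<le> y" by simp
    qed
  qed
  then show ?thesis using rp by blast
qed

lemma restrict_simps:
  "iV (restrict_dist I x) = {v \<in> iV I. dist I (roots I) v \<le> ereal x}"
  "iE (restrict_dist I x) = inner_edges I {v \<in> iV I. dist I (roots I) v \<le> ereal x}"
  "tail (restrict_dist I x) = tail I"
  "head (restrict_dist I x) = head I"
  "cost (restrict_dist I x) = cost I"
  "roots (restrict_dist I x) = roots I \<inter> {v \<in> iV I. dist I (roots I) v \<le> ereal x}"
  "terms (restrict_dist I x) = terms I \<inter> {v \<in> iV I. dist I (roots I) v \<le> ereal x}"
  by (simp_all add: restrict_dist_def Let_def)

lemma restrict_walk: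
  assumes wf: "wf_inst I" and r: "r \<in> roots I"
    and "walk (tail I) (head I) (iE I) r q u" "walk (tail I) (head I) (iE I) u p v"
    and "u \<in> iV I" and "real (pcost I q + pcost I p) \<le> x"
  shows "walk (tail I) (head I) (iE (restrict_dist I x)) u p v"
  using assms(3-)
proof (induction p arbitrary: q u)
  case Nil then show ?case by simp
next
  case (Cons e p)
  have e: "e \<in> iE I" "tail I e = u" "walk (tail I) (head I) (iE I) (head I e) p v" using Cons.prems by auto
  have hv: "head I e \<in> iV I" using wf e unfolding wf_inst_def by auto
  have du: "dist I (roots I) u \<le> ereal x"
    using dist_le[OF r Cons.prems(1)] Cons.prems(4) by (simp add: order_trans)
  have w2: "walk (tail I) (head I) (iE I) r (q @ [e]) (head I e)" using Cons.prems(1) e by auto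
  have dh: "dist I (roots I) (head I e) \<le> ereal x"
    using dist_le[OF r w2] Cons.prems(4) by (simp add: order_trans)
  have "e \<in> iE (restrict_dist I x)"
    using e du dh hv Cons.prems(3) by (simp add: restrict_simps inner_edges_def)
  moreover have "walk (tail I) (head I) (iE (restrict_dist I x)) (head I e) p v"
    using Cons.IH[OF w2 e(3) hv] Cons.prems(4) by simp
  ultimately show ?case using e by simp
qed


lemma finite_feasible: "finite (iE I) \<Longrightarrow> finite {F. feasible I F}"
  by (rule finite_subset[of _ "Pow (iE I)"]) (auto simp: feasible_def)

lemma opt_exists:
  assumes "finite (iE I)" "\<exists>F. feasible I F"
  shows "\<exists>F. feasible I F \<and> setcost I F = optv I"
proof -
  have "optv I \<in> setcost I ` {F. feasible I F}"
    unfolding optv_def using finite_feasible[OF assms(1)] assms(2) by (intro Min_in) auto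
  then show ?thesis by auto
qed

lemma opt_le: "finite (iE I) \<Longrightarrow> feasible I F \<Longrightarrow> optv I \<le> setcost I F"
  unfolding optv_def using finite_feasible by (intro Min_le) auto

lemma feasible_walk:
  assumes "finite (iE I)" "feasible I F" "t \<in> terms I"
  shows "\<exists>r q. r \<in> roots I \<and> walk (tail I) (head I) (iE I) r q t \<and> set q \<subseteq> F
            \<and> pcost I q \<le> setcost I F"
proof -
  obtain r p where rp: "r \<in> roots I" "walk (tail I) (head I) F r p t"
    using assms unfolding feasible_def by blast
  obtain q where q: "walk (tail I) (head I) F r q t" "distinct q" "set q \<subseteq> set p"
    using walk_distinct[OF rp(2)] by blast
  have F: "F \<subseteq> iE I" using assms unfolding feasible_def by blast
  have sq: "set q \<subseteq> F" using walk_set[OF q(1)] .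
  have "pcost I q = sum (cost I) (set q)" unfolding pcost_def using q(2)
    by (simp add: sum_list_distinct_conv_sum_set)
  also have "\<dots> \<le> setcost I F" unfolding setcost_def
    using sq F assms(1) by (intro sum_mono2) (auto intro: finite_subset)
  finally show ?thesis using rp(1) walk_subset[OF q(1), of "iE I"] sq F by blast
qed

lemma feasible_cost_pos:
  assumes "wf_inst I" "feasible I F" "t \<in> terms I"
  shows "1 \<le> setcost I F"
proof -
  obtain r p where rp: "r \<in> roots I" "walk (tail I) (head I) F r p t"
    using assms unfolding feasible_def by blast
  have "r \<noteq> t" using assms(1,3) rp(1) unfolding wf_inst_def by auto
  then obtain e p' where "p = e # p'" using rp(2) by (cases p) auto
  then have e: "e \<in> F" using rp(2) by auto
  have F: "F \<subseteq> iE I" "finite (iE I)" using assms unfolding feasible_def wf_inst_def by auto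
  have "cost I e \<le> setcost I F" unfolding setcost_def
    using e F by (intro member_le_sum) (auto intro: finite_subset)
  moreover have "cost I e > 0" using e F assms(1) unfolding wf_inst_def by auto
  ultimately show ?thesis by simp
qed

lemma opt_pos:
  assumes "wf_inst I" "\<exists>F. feasible I F" "terms I \<noteq> {}"
  shows "1 \<le> optv I"
proof -
  have "finite (iE I)" using assms(1) unfolding wf_inst_def by auto
  from opt_exists[OF this assms(2)] obtain F where "feasible I F" "setcost I F = optv I" by blast
  then show ?thesis using feasible_cost_pos[OF assms(1)] assms(3) by fastforce
qed

lemma dist_le_opt:
  assumes "wf_inst I" "\<exists>F. feasible I F" "t \<in> terms I"
  shows "dist I (roots I) t \<le> ereal (real (optv I))"
proof -
  have fin: "finite (iE I)" using assms(1) unfolding wf_inst_def by auto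
  from opt_exists[OF this assms(2)] obtain F where F: "feasible I F" "setcost I F = optv I" by blast
  from feasible_walk[OF fin F(1) assms(3)] obtain r q where
    "r \<in> roots I" "walk (tail I) (head I) (iE I) r q t" "pcost I q \<le> setcost I F" by blast
  then show ?thesis using dist_le[of r "roots I" I q t] F(2) by (simp add: order_trans)
qed

lemma uedges_sym: "sym (uedges ta he S)"
  unfolding uedges_def sym_def by blast

lemma comps_sub: "C \<in> comps J Y \<Longrightarrow> C \<subseteq> Y"
  unfolding comps_def by auto

lemma comps_disjoint:
  assumes "C1 \<in> comps J Y" "C2 \<in> comps J Y" "z \<in> C1" "z \<in> C2"
  shows "C1 = C2"
proof -
  let ?R = "(uedges (tail J) (head J) (inner_edges J Y))\<^sup>*"
  have sy: "sym ?R" by (rule sym_rtrancl[OF uedges_sym])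
  obtain u1 where u1: "C1 = {v \<in> Y. (u1, v) \<in> ?R}" using assms(1) unfolding comps_def by blast
  obtain u2 where u2: "C2 = {v \<in> Y. (u2, v) \<in> ?R}" using assms(2) unfolding comps_def by blast
  have a: "(u1, z) \<in> ?R" and b: "(u2, z) \<in> ?R" using assms(3,4) u1 u2 by auto
  have a': "(z, u1) \<in> ?R" using symD[OF sy a] .
  have b': "(z, u2) \<in> ?R" using symD[OF sy b] .
  have 12: "(u1, u2) \<in> ?R" using rtrancl_trans[OF a b'] .
  have 21: "(u2, u1) \<in> ?R" using rtrancl_trans[OF b a'] .
  show ?thesis unfolding u1 u2
  proof (intro set_eqI iffI)
    fix v assume "v \<in> {v \<in> Y. (u1, v) \<in> ?R}"
    then show "v \<in> {v \<in> Y. (u2, v) \<in> ?R}" using rtrancl_trans[OF 21] by blast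
  next
    fix v assume "v \<in> {v \<in> Y. (u2, v) \<in> ?R}"
    then show "v \<in> {v \<in> Y. (u1, v) \<in> ?R}" using rtrancl_trans[OF 12] by blast
  qed
qed

lemma comps_closed:
  assumes "C \<in> comps J Y" "e \<in> inner_edges J Y"
  shows "tail J e \<in> C \<longleftrightarrow> head J e \<in> C"
proof -
  let ?R = "(uedges (tail J) (head J) (inner_edges J Y))"
  obtain u where u: "C = {v \<in> Y. (u, v) \<in> ?R\<^sup>*}" using assms(1) unfolding comps_def by blast
  have "(tail J e, head J e) \<in> ?R" "(head J e, tail J e) \<in> ?R" using assms(2) unfolding uedges_def by blast+
  moreover have "tail J e \<in> Y" "head J e \<in> Y" using assms(2) unfolding inner_edges_def by auto
  ultimately show ?thesis unfolding u using rtrancl.rtrancl_into_rtrancl[of u _ ?R] by blast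
qed

lemma comp_of: "z \<in> Y \<Longrightarrow> \<exists>C\<in>comps J Y. z \<in> C"
  unfolding comps_def by blast

lemma walk_split_last:
  "walk ta he S a p t \<Longrightarrow> t \<notin> Vt \<Longrightarrow>
   (a \<notin> Vt \<and> (\<forall>e\<in>set p. he e \<notin> Vt)) \<or>
   (\<exists>p1 p2 u. p = p1 @ p2 \<and> u \<in> Vt \<and> walk ta he S a p1 u \<and> walk ta he S u p2 t \<and> (\<forall>e\<in>set p2. he e \<notin> Vt))"
proof (induction p arbitrary: a)
  case Nil then show ?case by simp
next
  case (Cons e p)
  have e: "e \<in> S" "ta e = a" "walk ta he S (he e) p t" using Cons.prems by auto
  from Cons.IH[OF e(3) Cons.prems(2)] show ?case
  proof
    assume h: "he e \<notin> Vt \<and> (\<forall>e\<in>set p. he e \<notin> Vt)"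
    show ?thesis
    proof (cases "a \<in> Vt")
      case True
      then show ?thesis using h Cons.prems(1) by (intro disjI2 exI[of _ "[]"] exI[of _ "e # p"] exI[of _ a]) auto
    next
      case False then show ?thesis using h by auto
    qed
  next
    assume "\<exists>p1 p2 u. p = p1 @ p2 \<and> u \<in> Vt \<and> walk ta he S (he e) p1 u \<and> walk ta he S u p2 t \<and> (\<forall>e\<in>set p2. he e \<notin> Vt)"
    then obtain p1 p2 u where "p = p1 @ p2" "u \<in> Vt" "walk ta he S (he e) p1 u" "walk ta he S u p2 t" "\<forall>e\<in>set p2. he e \<notin> Vt"
      by blast
    then show ?thesis using e by (intro disjI2 exI[of _ "e # p1"] exI[of _ p2] exI[of _ u]) auto
  qed
qed

lemma walk_in_comp:
  assumes "C \<in> comps J Y" "walk (tail J) (head J) S a q t" "S \<subseteq> iE J" "t \<in> C"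
    "\<forall>e\<in>set q. head J e \<in> Y"
  shows "(\<forall>e\<in>set q. head J e \<in> C) \<and> (a \<in> Y \<longrightarrow> a \<in> C)"
  using assms(2-)
proof (induction q arbitrary: a)
  case Nil then show ?case by simp
next
  case (Cons e q)
  have e: "e \<in> S" "tail J e = a" "walk (tail J) (head J) S (head J e) q t" using Cons.prems by auto
  have hY: "head J e \<in> Y" using Cons.prems by auto
  from Cons.IH[OF e(3) Cons.prems(2,3)] Cons.prems(4) hY
  have ih: "\<forall>e\<in>set q. head J e \<in> C" "head J e \<in> C" by auto
  have "a \<in> Y \<longrightarrow> a \<in> C"
  proof
    assume "a \<in> Y"
    then have "e \<in> inner_edges J Y" using e hY Cons.prems(2) unfolding inner_edges_def by auto
    then show "a \<in> C" using comps_closed[OF assms(1)] ih(2) e(2) by blast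
  qed
  then show ?case using ih by auto
qed

lemma lower_walk:
  assumes "walk ta he S a q t" "\<forall>e\<in>set q. he e \<in> C" "C \<inter> Vt = {}" "a \<in> C \<union> Vt" "t \<in> C"
  shows "walk (\<lambda>e. if ta e \<in> Vt then rT else ta e) (\<lambda>e. if he e \<in> Vt then rT else he e)
           {e\<in>S. ta e \<in> C \<union> Vt \<and> he e \<in> C \<union> Vt \<and> (ta e \<in> C \<or> he e \<in> C)}
           (if a \<in> Vt then rT else a) q t"
  using assms
proof (induction q arbitrary: a)
  case Nil then show ?case by auto
next
  case (Cons e q)
  have e: "e \<in> S" "ta e = a" "walk ta he S (he e) q t" "he e \<in> C" using Cons.prems by auto
  have "he e \<notin> Vt" using e(4) Cons.prems(3) by auto
  moreover have "walk (\<lambda>e. if ta e \<in> Vt then rT else ta e) (\<lambda>e. if he e \<in> Vt then rT else he e)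
           {e\<in>S. ta e \<in> C \<union> Vt \<and> he e \<in> C \<union> Vt \<and> (ta e \<in> C \<or> he e \<in> C)}
           (if he e \<in> Vt then rT else he e) q t"
    using Cons.IH[OF e(3)] Cons.prems e(4) by auto
  ultimately show ?case using e Cons.prems(4) by auto
qed

lemma lift_walk:
  assumes "walk (\<lambda>e. if ta e \<in> Vt then rT else ta e) (\<lambda>e. if he e \<in> Vt then rT else he e) S \<rho> q t"
    "t \<in> C" "rT \<notin> C" "C \<inter> Vt = {}" "\<forall>e\<in>S. ta e \<in> C \<union> Vt \<and> he e \<in> C \<union> Vt"
  shows "(\<exists>u\<in>Vt. \<exists>q'. walk ta he S u q' t) \<or> (\<rho> \<noteq> rT \<and> \<rho> \<in> C \<and> walk ta he S \<rho> q t)"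
  using assms
proof (induction q arbitrary: \<rho>)
  case Nil then show ?case by auto
next
  case (Cons e q)
  let ?ct = "\<lambda>e. if ta e \<in> Vt then rT else ta e"
  let ?ch = "\<lambda>e. if he e \<in> Vt then rT else he e"
  have e: "e \<in> S" "?ct e = \<rho>" "walk ?ct ?ch S (?ch e) q t" using Cons.prems by auto
  from Cons.IH[OF e(3) Cons.prems(2-)] show ?case
  proof
    assume "\<exists>u\<in>Vt. \<exists>q'. walk ta he S u q' t" then show ?thesis by blast
  next
    assume h: "?ch e \<noteq> rT \<and> ?ch e \<in> C \<and> walk ta he S (?ch e) q t"
    then have hn: "he e \<notin> Vt" by auto
    then have w: "walk ta he S (he e) q t" using h by auto
    show ?thesis
    proof (cases "ta e \<in> Vt")
      case True
      then show ?thesis using w e(1) by (intro disjI1 bexI[of _ "ta e"] exI[of _ "e # q"]) auto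
    next
      case False
      then have "ta e \<in> C" using Cons.prems(5) e(1) by auto
      then show ?thesis using False e w Cons.prems(3) by auto
    qed
  qed
qed


lemma arb_walk_cost:
  assumes "sp_arborescences J A" "r \<in> roots J" "walk (tail J) (head J) (A r) r p v"
  shows "ereal (real (pcost J p)) = dist J (roots J) v"
proof -
  have all: "\<forall>r\<in>roots J. A r \<subseteq> iE J
        \<and> (\<forall>e\<in>A r. head J e \<noteq> r \<and> tail J e \<in> arb_verts J (A r) r)
        \<and> (\<forall>v\<in>arb_verts J (A r) r - {r}. \<exists>!e. e \<in> A r \<and> head J e = v)
        \<and> (\<forall>v\<in>arb_verts J (A r) r. \<exists>p. walk (tail J) (head J) (A r) r p v
                \<and> ereal (real (pcost J p)) = dist J (roots J) v)"
    using assms(1) unfolding sp_arborescences_def by (rule conjunct1)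
  have ar0: "A r \<subseteq> iE J
        \<and> (\<forall>e\<in>A r. head J e \<noteq> r \<and> tail J e \<in> arb_verts J (A r) r)
        \<and> (\<forall>v\<in>arb_verts J (A r) r - {r}. \<exists>!e. e \<in> A r \<and> head J e = v)
        \<and> (\<forall>v\<in>arb_verts J (A r) r. \<exists>p. walk (tail J) (head J) (A r) r p v
                \<and> ereal (real (pcost J p)) = dist J (roots J) v)"
    using all assms(2) by (rule bspec)
  have ar1: "\<forall>e\<in>A r. head J e \<noteq> r \<and> tail J e \<in> arb_verts J (A r) r"
    using ar0 by (elim conjE) assumption
  have ar2: "\<forall>v\<in>arb_verts J (A r) r - {r}. \<exists>!e. e \<in> A r \<and> head J e = v"
    using ar0 by (elim conjE) assumption
  have ar3: "\<forall>v\<in>arb_verts J (A r) r. \<exists>p. walk (tail J) (head J) (A r) r p v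
                \<and> ereal (real (pcost J p)) = dist J (roots J) v"
    using ar0 by (elim conjE) assumption
  note ar = ar1 ar2 ar3
  have "v = r \<or> v \<in> head J ` set p" by (rule walk_end[OF assms(3)])
  moreover have "set p \<subseteq> A r" by (rule walk_set[OF assms(3)])
  ultimately have "v \<in> arb_verts J (A r) r" unfolding arb_verts_def by auto
  then obtain q where q: "walk (tail J) (head J) (A r) r q v" "ereal (real (pcost J q)) = dist J (roots J) v"
    using ar(3) by blast
  have u: "\<forall>e\<in>A r. \<forall>e'\<in>A r. head J e = head J e' \<longrightarrow> e = e'"
  proof (intro ballI impI)
    fix e e' assume h: "e \<in> A r" "e' \<in> A r" "head J e = head J e'"
    have "head J e \<in> arb_verts J (A r) r - {r}" using h ar(1) unfolding arb_verts_def by auto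
    then obtain e0 where "\<forall>y. y \<in> A r \<and> head J y = head J e \<longrightarrow> y = e0" using ar(2) by blast
    then show "e = e'" using h by metis
  qed
  have "p = q" using walk_unique[OF assms(3) q(1)] ar(1) u by blast
  then show ?thesis using q(2) by simp
qed

lemma sp_sub:
  assumes "sp_arborescences J A" "r \<in> roots J"
  shows "A r \<subseteq> iE J"
proof -
  have all: "\<forall>r\<in>roots J. A r \<subseteq> iE J
        \<and> (\<forall>e\<in>A r. head J e \<noteq> r \<and> tail J e \<in> arb_verts J (A r) r)
        \<and> (\<forall>v\<in>arb_verts J (A r) r - {r}. \<exists>!e. e \<in> A r \<and> head J e = v)
        \<and> (\<forall>v\<in>arb_verts J (A r) r. \<exists>p. walk (tail J) (head J) (A r) r p v
                \<and> ereal (real (pcost J p)) = dist J (roots J) v)"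
    using assms(1) unfolding sp_arborescences_def by (rule conjunct1)
  then show ?thesis using assms(2) by blast
qed

lemma dist_restrict:
  assumes wf: "wf_inst I" and v: "v \<in> iV (restrict_dist I x)"
  shows "dist (restrict_dist I x) (roots (restrict_dist I x)) v \<le> ereal x"
proof -
  have dv: "dist I (roots I) v \<le> ereal x" using v by (simp add: restrict_simps)
  obtain r p where rp: "r \<in> roots I" "walk (tail I) (head I) (iE I) r p v" "dist I (roots I) v = ereal (real (pcost I p))"
    using dist_attained[OF dv] by blast
  have px: "real (pcost I p) \<le> x" using rp(3) dv by simp
  have rV: "r \<in> iV I" using wf rp(1) unfolding wf_inst_def by auto
  have w: "walk (tail I) (head I) (iE (restrict_dist I x)) r p v"
    using restrict_walk[OF wf rp(1) _ rp(2) rV, of "[]"] px by simp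
  have "dist I (roots I) r \<le> ereal 0" using dist_le[OF rp(1), of I "[]" r] by simp
  moreover have "0 \<le> x" using px by linarith
  ultimately have "dist I (roots I) r \<le> ereal x" by (meson ereal_less_eq(3) order_trans)
  then have "r \<in> roots (restrict_dist I x)" using rp(1) rV by (simp add: restrict_simps)
  then have "dist (restrict_dist I x) (roots (restrict_dist I x)) v \<le> ereal (real (pcost I p))"
    using dist_le[of r "roots (restrict_dist I x)" "restrict_dist I x" p v] w by (simp add: restrict_simps pcost_def)
  then show ?thesis using px by (meson ereal_less_eq(3) order_trans)
qed

lemma gs_parts1:
  assumes "good_separator J A P F"
  shows "\<forall>r\<in>roots J. finite (P r) \<and> card (P r) \<le> 4
           \<and> (\<forall>p\<in>P r. \<exists>v. walk (tail J) (head J) (A r) r p v)"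
  using assms unfolding good_separator_def Let_def by (elim conjE) assumption

lemma gs_parts3:
  assumes "good_separator J A P F"
  shows "\<forall>C\<in>comps J (iV J - (\<Union>r\<in>roots J. T_verts J P r)). 2 * card (C \<inter> terms J) \<le> card (terms J)"
  using assms unfolding good_separator_def Let_def by (elim conjE) assumption

lemmas gs_parts = gs_parts1 gs_parts1 gs_parts3

lemma Vt_reach:
  assumes "good_separator J A P F" "u \<in> (\<Union>r\<in>roots J. T_verts J P r)"
  shows "\<exists>r\<in>roots J. \<exists>p. walk (tail J) (head J) (\<Union>r\<in>roots J. T_edges P r) r p u"
proof -
  obtain r where r: "r \<in> roots J" "u \<in> T_verts J P r" using assms(2) by blast
  have Pw: "\<forall>p\<in>P r. \<exists>v. walk (tail J) (head J) (A r) r p v"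
    using gs_parts(1)[OF assms(1)] r(1) by blast
  show ?thesis
  proof (cases "u = r")
    case True then show ?thesis using r(1) by (intro bexI[of _ r] exI[of _ "[]"]) auto
  next
    case False
    then have "u \<in> head J ` T_edges P r" using r(2) unfolding T_verts_def by (auto split: if_splits)
    then obtain e p where ep: "p \<in> P r" "e \<in> set p" "u = head J e" unfolding T_edges_def by blast
    obtain v where "walk (tail J) (head J) (A r) r p v" using Pw ep(1) by blast
    moreover obtain a b where "p = a @ e # b" using split_list[OF ep(2)] by blast
    ultimately have w: "walk (tail J) (head J) (A r) r (a @ [e]) u" using ep(3) by auto
    have "set (a @ [e]) \<subseteq> set p" using \<open>p = a @ e # b\<close> by auto
    also have "set p \<subseteq> T_edges P r" using ep(1) unfolding T_edges_def by blast
    also have "T_edges P r \<subseteq> (\<Union>r\<in>roots J. T_edges P r)" using r(1) by blast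
    finally have "set (a @ [e]) \<subseteq> (\<Union>r\<in>roots J. T_edges P r)" .
    then show ?thesis using walk_subset[OF w] r(1) by blast
  qed
qed

lemma Te_cost:
  assumes wf: "wf_inst I" and J: "J = restrict_dist I x" and sp: "sp_arborescences J A"
    and gs: "good_separator J A P F" and x0: "0 \<le> x"
  shows "real (setcost I (\<Union>r\<in>roots J. T_edges P r)) \<le> 4 * x * real (card {r \<in> roots J. P r \<noteq> {}})"
proof -
  have fRI: "finite (roots I)" using wf unfolding wf_inst_def by (meson finite_subset)
  have "roots J \<subseteq> roots I" unfolding J by (simp add: restrict_simps)
  then have finR: "finite (roots J)" using fRI by (rule finite_subset)
  have Pr: "\<forall>r\<in>roots J. finite (P r) \<and> card (P r) \<le> 4 \<and> (\<forall>p\<in>P r. \<exists>v. walk (tail J) (head J) (A r) r p v)"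
    using gs_parts(1)[OF gs] .
  have finT: "\<forall>r\<in>roots J. finite (T_edges P r)" using Pr unfolding T_edges_def by auto
  have pc: "real (pcost I p) \<le> x" if "r \<in> roots J" "p \<in> P r" for r p
  proof -
    have "finite (P r) \<and> card (P r) \<le> 4 \<and> (\<forall>p\<in>P r. \<exists>v. walk (tail J) (head J) (A r) r p v)"
      by (rule bspec[OF Pr that(1)])
    then have "\<exists>v. walk (tail J) (head J) (A r) r p v" using that(2) by blast
    then obtain v where w: "walk (tail J) (head J) (A r) r p v" by blast
    have c: "ereal (real (pcost J p)) = dist J (roots J) v" by (rule arb_walk_cost[OF sp that(1) w])
    have "v = r \<or> v \<in> head J ` set p" by (rule walk_end[OF w])
    moreover have "set p \<subseteq> iE J" using walk_set[OF w] sp_sub[OF sp that(1)] by blast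
    moreover have "r \<in> iV J" using that(1) unfolding J by (simp add: restrict_simps)
    moreover have "head J ` iE J \<subseteq> iV J" unfolding J by (auto simp: restrict_simps inner_edges_def)
    ultimately have "v \<in> iV J" by blast
    then have "dist J (roots J) v \<le> ereal x" using dist_restrict[OF wf, of v x] unfolding J by simp
    then have "ereal (real (pcost J p)) \<le> ereal x" using c by simp
    moreover have "pcost J p = pcost I p" unfolding J pcost_def by (simp add: restrict_simps)
    ultimately show ?thesis by simp
  qed
  have Tr: "real (setcost I (T_edges P r)) \<le> (if P r \<noteq> {} then 4 * x else 0)" if r: "r \<in> roots J" for r
  proof -
    have fP: "finite (P r)" using Pr r by blast
    have "T_edges P r = \<Union>(set ` P r)" unfolding T_edges_def by blast
    then have "setcost I (T_edges P r) \<le> (\<Sum>S\<in>set ` P r. setcost I S)"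
      unfolding setcost_def using sum_Union_le_nat[of "set ` P r" "cost I"] fP by simp
    also have "\<dots> \<le> (\<Sum>p\<in>P r. setcost I (set p))"
      using sum_image_le[of "P r" "setcost I" set] fP by (simp add: o_def)
    also have "\<dots> \<le> (\<Sum>p\<in>P r. pcost I p)"
      unfolding setcost_def pcost_def by (intro sum_mono sum_set_le_sum_list)
    finally have "real (setcost I (T_edges P r)) \<le> (\<Sum>p\<in>P r. real (pcost I p))"
      by (metis of_nat_le_iff of_nat_sum)
    also have "\<dots> \<le> real (card (P r)) * x"
      using sum_bounded_above[of "P r" "\<lambda>p. real (pcost I p)" x] pc[OF r] by simp
    also have "\<dots> \<le> (if P r \<noteq> {} then 4 * x else 0)"
    proof (cases "P r = {}")
      case True then show ?thesis by simp
    next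
      case False
      have "card (P r) \<le> 4" using Pr r by blast
      then have "real (card (P r)) * x \<le> 4 * x" using x0 by (intro mult_right_mono) auto
      then show ?thesis using False by simp
    qed
    finally show ?thesis .
  qed
  have "setcost I (\<Union>r\<in>roots J. T_edges P r) \<le> (\<Sum>S\<in>T_edges P ` roots J. setcost I S)"
    unfolding setcost_def using sum_Union_le_nat[of "T_edges P ` roots J" "cost I"] finR finT by auto
  also have "\<dots> \<le> (\<Sum>r\<in>roots J. setcost I (T_edges P r))"
    using sum_image_le[of "roots J" "setcost I" "T_edges P"] finR by (simp add: o_def)
  finally have "real (setcost I (\<Union>r\<in>roots J. T_edges P r)) \<le> (\<Sum>r\<in>roots J. real (setcost I (T_edges P r)))"
    by (metis of_nat_le_iff of_nat_sum)
  also have "\<dots> \<le> (\<Sum>r\<in>roots J. (if P r \<noteq> {} then 4 * x else 0))"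
    by (intro sum_mono Tr)
  also have "\<dots> = 4 * x * real (card {r \<in> roots J. P r \<noteq> {}})"
    using sum.inter_filter[OF finR, of "\<lambda>_. 4 * x" "\<lambda>r. P r \<noteq> {}"] by (simp add: mult.commute)
  finally show ?thesis .
qed


lemma contract_simps:
  "iV (contract_sub J Vt C rT) = C \<union> {rT}"
  "iE (contract_sub J Vt C rT) = {e \<in> iE J. tail J e \<in> C \<union> Vt \<and> head J e \<in> C \<union> Vt}"
  "tail (contract_sub J Vt C rT) = (\<lambda>e. if tail J e \<in> Vt then rT else tail J e)"
  "head (contract_sub J Vt C rT) = (\<lambda>e. if head J e \<in> Vt then rT else head J e)"
  "cost (contract_sub J Vt C rT) = cost J"
  "roots (contract_sub J Vt C rT) = {rT} \<union> (roots J \<inter> C)"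
  "terms (contract_sub J Vt C rT) = terms J \<inter> C"
  by (simp_all add: contract_sub_def)

lemma Te_sub:
  assumes "sp_arborescences J A" "good_separator J A P F"
  shows "(\<Union>r\<in>roots J. T_edges P r) \<subseteq> iE J"
proof
  fix e assume "e \<in> (\<Union>r\<in>roots J. T_edges P r)"
  then obtain r p where rp: "r \<in> roots J" "p \<in> P r" "e \<in> set p" unfolding T_edges_def by blast
  have "finite (P r) \<and> card (P r) \<le> 4 \<and> (\<forall>p\<in>P r. \<exists>v. walk (tail J) (head J) (A r) r p v)"
    by (rule bspec[OF gs_parts1[OF assms(2)] rp(1)])
  then have "\<exists>v. walk (tail J) (head J) (A r) r p v" using rp(2) by blast
  then obtain v where "walk (tail J) (head J) (A r) r p v" by blast
  then have "set p \<subseteq> A r" by (rule walk_set)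
  then show "e \<in> iE J" using sp_sub[OF assms(1) rp(1)] rp(3) by blast
qed

lemma restrict_sub: "iE (restrict_dist I x) \<subseteq> iE I" "roots (restrict_dist I x) \<subseteq> roots I"
  by (auto simp: restrict_simps inner_edges_def)

lemma dst_sound:
  assumes "dst_run I x res n" "terms I \<subseteq> iV I" "res = Some G"
  shows "feasible I G"
  using assms
proof (induction arbitrary: G rule: dst_run.induct)
  case (single x I t r p)
  then show ?case unfolding feasible_def using walk_set[OF single(5)] walk_subset[OF single(5), of "set p"]
    by auto
next
  case (recur x I res1 n1 I' A P Fs Te Vt Cs rT resC nC res2 res)
  note h = recur
  show ?case
  proof (cases "res = res1")
    case True then show ?thesis using h(15)[OF h(17)] h(18) by simp
  next
    case False
    then have r2: "res2 = Some G" using h(12) h(18) by simp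
    then have allS: "\<forall>C\<in>Cs. resC C \<noteq> None" and G: "G = Te \<union> (\<Union>C\<in>Cs. the (resC C))"
      using h(11) by (auto split: if_splits)
    have tI': "tail I' = tail I" "head I' = head I" using h(5) by (simp_all add: restrict_simps)
    have EI: "iE I' \<subseteq> iE I" using h(5) restrict_sub(1) by simp
    have RI: "roots I' \<subseteq> roots I" using h(5) restrict_sub(2) by simp
    have subfeas: "feasible (contract_sub I' Vt C (rT C)) (the (resC C))" if C: "C \<in> Cs" for C
    proof -
      have "rT C \<notin> C \<and> dst_run (contract_sub I' Vt C (rT C)) x (resC C) (nC C) \<and>
        (terms (contract_sub I' Vt C (rT C)) \<subseteq> iV (contract_sub I' Vt C (rT C)) \<longrightarrow>
         (\<forall>x. resC C = Some x \<longrightarrow> feasible (contract_sub I' Vt C (rT C)) x))"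
        by (rule bspec[OF h(16) C])
      moreover have "terms (contract_sub I' Vt C (rT C)) \<subseteq> iV (contract_sub I' Vt C (rT C))"
        by (auto simp: contract_simps)
      moreover have "resC C = Some (the (resC C))" using allS C by auto
      ultimately show ?thesis by metis
    qed
    have TeI: "Te \<subseteq> iE I" using Te_sub[OF h(6) h(7)] h(8) EI by blast
    have "the (resC C) \<subseteq> iE I" if C: "C \<in> Cs" for C
    proof -
      have "the (resC C) \<subseteq> iE (contract_sub I' Vt C (rT C))" using subfeas[OF C] unfolding feasible_def by blast
      also have "\<dots> \<subseteq> iE I'" by (auto simp: contract_simps)
      finally show ?thesis using EI by blast
    qed
    then have GE: "G \<subseteq> iE I" using G TeI by blast
    have reach: "\<exists>r\<in>roots I. \<exists>p. walk (tail I) (head I) G r p t" if t: "t \<in> terms I" for t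
    proof -
      have tV: "t \<in> iV I'" using t h(2) h(17) h(5) by (auto simp: restrict_simps)
      have tT: "t \<in> terms I'" using t h(2) h(17) h(5) by (auto simp: restrict_simps)
      have VtR: "\<exists>r\<in>roots I. \<exists>p. walk (tail I) (head I) G r p u" if u: "u \<in> Vt" for u
      proof -
        obtain r where r: "r \<in> roots I'" "\<exists>p. walk (tail I') (head I') Te r p u"
          using Vt_reach[OF h(7)] u h(8) h(9) by blast
        obtain p where p: "walk (tail I') (head I') Te r p u" using r(2) by blast
        have "walk (tail I) (head I) G r p u" using walk_subset[OF p, of G] walk_set[OF p] G tI' by auto
        moreover have "r \<in> roots I" using r(1) RI by blast
        ultimately show ?thesis by blast
      qed
      show ?thesis
      proof (cases "t \<in> Vt")
        case True then show ?thesis using VtR by blast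
      next
        case False
        then have "t \<in> iV I' - Vt" using tV by blast
        then obtain C where C: "C \<in> comps I' (iV I' - Vt)" "t \<in> C" using comp_of[of t "iV I' - Vt" I'] by blast
        have "C \<inter> terms I' \<noteq> {}" using C(2) tT by blast
        then have CC: "C \<in> Cs" unfolding h(10) using C(1) by simp
        have CV: "C \<inter> Vt = {}" using comps_sub[OF C(1)] by blast
        have rTC: "rT C \<notin> C" using h(16) CC by blast
        let ?S = "contract_sub I' Vt C (rT C)"
        have "t \<in> terms ?S" using tT C(2) by (simp add: contract_simps)
        then obtain \<rho> where \<rho>: "\<rho> \<in> roots ?S" "\<exists>q. walk (tail ?S) (head ?S) (the (resC C)) \<rho> q t"
          using subfeas[OF CC] unfolding feasible_def by blast
        obtain q where q: "walk (tail ?S) (head ?S) (the (resC C)) \<rho> q t" using \<rho>(2) by blast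
        have Ssub: "\<forall>e\<in>the (resC C). tail I' e \<in> C \<union> Vt \<and> head I' e \<in> C \<union> Vt"
          using subfeas[OF CC] unfolding feasible_def by (auto simp: contract_simps)
        have q': "walk (\<lambda>e. if tail I' e \<in> Vt then rT C else tail I' e) (\<lambda>e. if head I' e \<in> Vt then rT C else head I' e)
           (the (resC C)) \<rho> q t" using q by (simp add: contract_simps)
        have subG: "the (resC C) \<subseteq> G" using G CC by blast
        from lift_walk[OF q' C(2) rTC CV Ssub] show ?thesis
        proof
          assume "\<exists>u\<in>Vt. \<exists>q'. walk (tail I') (head I') (the (resC C)) u q' t"
          then obtain u q2 where u: "u \<in> Vt" "walk (tail I') (head I') (the (resC C)) u q2 t" by blast
          obtain r p where rp: "r \<in> roots I" "walk (tail I) (head I) G r p u" using VtR[OF u(1)] by blast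
          have "walk (tail I) (head I) G u q2 t" using walk_subset[OF u(2) order_trans[OF walk_set[OF u(2)] subG]] tI' by simp
          then have "walk (tail I) (head I) G r (p @ q2) t" using rp(2) by auto
          then show ?thesis using rp(1) by blast
        next
          assume a: "\<rho> \<noteq> rT C \<and> \<rho> \<in> C \<and> walk (tail I') (head I') (the (resC C)) \<rho> q t"
          then have "\<rho> \<in> roots I'" using \<rho>(1) by (simp add: contract_simps)
          then have "\<rho> \<in> roots I" using RI by blast
          moreover have "walk (tail I) (head I) G \<rho> q t"
            using walk_subset[OF conjunct2[OF conjunct2[OF a]] order_trans[OF walk_set[OF conjunct2[OF conjunct2[OF a]]] subG]] tI' by simp
          ultimately show ?thesis by blast
        qed
      qed
    qed
    show ?thesis unfolding feasible_def using GE reach by blast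
  qed
qed auto


lemma run_small: "dst_run I x res n \<Longrightarrow> x < 1 \<Longrightarrow> n = 1"
  by (cases rule: dst_run.cases) auto

lemma comps_sum_le:
  assumes "Cs \<subseteq> comps J Y" "finite T"
  shows "(\<Sum>C\<in>Cs. card (T \<inter> C)) \<le> card T"
proof (cases "finite Cs")
  case True
  have "(\<Sum>C\<in>Cs. card (T \<inter> C)) = card (\<Union>C\<in>Cs. T \<inter> C)"
  proof (rule card_UN_disjoint[symmetric])
    show "finite Cs" by fact
    show "\<forall>i\<in>Cs. finite (T \<inter> i)" using assms(2) by blast
    show "\<forall>i\<in>Cs. \<forall>j\<in>Cs. i \<noteq> j \<longrightarrow> T \<inter> i \<inter> (T \<inter> j) = {}"
    proof (intro ballI impI)
      fix i j assume ij: "i \<in> Cs" "j \<in> Cs" "i \<noteq> j"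
      show "T \<inter> i \<inter> (T \<inter> j) = {}"
      proof (rule ccontr)
        assume "T \<inter> i \<inter> (T \<inter> j) \<noteq> {}"
        then obtain z where "z \<in> i" "z \<in> j" by blast
        then have "i = j" using comps_disjoint[of i J Y j z] ij assms(1) by blast
        then show False using ij by simp
      qed
    qed
  qed
  also have "\<dots> \<le> card T" using assms(2) by (intro card_mono) auto
  finally show ?thesis .
next
  case False then show ?thesis by simp
qed

lemma dst_count:
  assumes "dst_run I x res n" "finite (terms I)" "terms I \<noteq> {}" "card (terms I) \<le> 2^l" "x \<le> 2^k"
  shows "n \<le> card (terms I) * 2^(2*l+k)"
  using assms
proof (induction arbitrary: l k rule: dst_run.induct)
  case (infeas x I)
  then have "1 \<le> card (terms I)" by (simp add: Suc_le_eq card_gt_0_iff)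
  moreover have "1 \<le> (2::nat)^(2*l+k)" by simp
  ultimately show ?case using one_le_mult_iff by auto
next
  case (single x I t r p)
  then show ?case by simp
next
  case (recur x I res1 n1 I' A P Fs Te Vt Cs rT resC nC res2 res)
  note h = recur
  define N where "N = card (terms I)"
  have "card (terms I) \<noteq> 0" using h(17) h(18) by simp
  then have N2: "2 \<le> N" using h(3) unfolding N_def by linarith
  obtain l' where l': "l = Suc l'"
  proof (cases l)
    case 0 then show ?thesis using h(19) N2 unfolding N_def by simp
  next
    case (Suc m) then show ?thesis using that by blast
  qed
  have tI': "terms I' \<subseteq> terms I" using h(5) by (auto simp: restrict_simps)
  have finT': "finite (terms I')" using tI' h(17) by (rule finite_subset)
  have cT': "card (terms I') \<le> N" unfolding N_def using tI' h(17) by (rule card_mono[rotated])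
  have gs3: "\<forall>C\<in>comps I' (iV I' - Vt). 2 * card (C \<inter> terms I') \<le> card (terms I')"
    using gs_parts3[OF h(7)] h(9) by simp
  have CsC: "Cs \<subseteq> comps I' (iV I' - Vt)" using h(10) by blast
  have nC: "nC C \<le> card (terms I' \<inter> C) * 2^(2*l'+k)" if C: "C \<in> Cs" for C
  proof -
    have st: "terms (contract_sub I' Vt C (rT C)) = terms I' \<inter> C" by (simp add: contract_simps)
    have "2 * card (C \<inter> terms I') \<le> card (terms I')" using gs3 CsC C by blast
    then have c: "card (terms I' \<inter> C) \<le> 2^l'" using cT' h(19) l' unfolding N_def
      by (simp add: Int_commute)
    have ne: "terms I' \<inter> C \<noteq> {}" using C h(10) by blast
    have fi: "finite (terms I' \<inter> C)" using finT' by blast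
    have "rT C \<notin> C \<and> dst_run (contract_sub I' Vt C (rT C)) x (resC C) (nC C) \<and>
       (finite (terms (contract_sub I' Vt C (rT C))) \<longrightarrow> terms (contract_sub I' Vt C (rT C)) \<noteq> {} \<longrightarrow>
        (\<forall>l. card (terms (contract_sub I' Vt C (rT C))) \<le> 2 ^ l \<longrightarrow> (\<forall>k. x \<le> 2 ^ k \<longrightarrow>
            nC C \<le> card (terms (contract_sub I' Vt C (rT C))) * 2 ^ (2 * l + k))))"
      by (rule bspec[OF h(16) C])
    then show ?thesis using st c ne fi h(20) by simp
  qed
  have sumC: "(\<Sum>C\<in>Cs. nC C) \<le> N * 2^(2*l'+k)"
  proof -
    have "(\<Sum>C\<in>Cs. nC C) \<le> (\<Sum>C\<in>Cs. card (terms I' \<inter> C) * 2^(2*l'+k))"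
      by (rule sum_mono) (rule nC)
    also have "\<dots> = (\<Sum>C\<in>Cs. card (terms I' \<inter> C)) * 2^(2*l'+k)" by (simp add: sum_distrib_right)
    also have "\<dots> \<le> card (terms I') * 2^(2*l'+k)"
      using comps_sum_le[OF CsC finT'] by simp
    also have "\<dots> \<le> N * 2^(2*l'+k)" using cT' by simp
    finally show ?thesis .
  qed
  define B where "B = N * 2^(2*l')"
  have B2: "2 \<le> B" unfolding B_def using N2 by (metis mult_le_mono one_le_numeral one_le_power mult.right_neutral)
  show ?case
  proof (cases k)
    case 0
    have "x / 2 < 1" using h(20) 0 by simp
    then have "n1 = 1" using run_small[OF h(4)] by simp
    moreover have "(\<Sum>C\<in>Cs. nC C) \<le> B" using sumC 0 unfolding B_def by simp
    moreover have "N * 2 ^ (2 * l + k) = 4 * B" unfolding B_def using 0 l' by (simp add: power_add)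
    ultimately show ?thesis unfolding N_def using B2 by simp
  next
    case (Suc k')
    have "x / 2 \<le> 2^k'" using h(20) Suc by simp
    then have n1: "n1 \<le> N * 2^(2*l+k')" using h(15)[OF h(17) h(18) h(19)] unfolding N_def by blast
    define A where "A = N * 2^(2*l'+k')"
    have A2: "2 \<le> A" unfolding A_def using N2 by (metis mult_le_mono one_le_numeral one_le_power mult.right_neutral)
    have "N * 2^(2*l+k') = 4 * A" unfolding A_def using l' by (simp add: power_add)
    moreover have "N * 2^(2*l'+k) = 2 * A" unfolding A_def using Suc by (simp add: power_add)
    moreover have "N * 2^(2*l+k) = 8 * A" unfolding A_def using Suc l' by (simp add: power_add)
    ultimately show ?thesis using n1 sumC A2 unfolding N_def by simp
  qed
qed


lemma ocost_le_Some:
  assumes "ocost I res \<le> ocost I (Some G)"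
  shows "\<exists>F. res = Some F \<and> setcost I F \<le> setcost I G"
  using assms by (cases res) (auto simp: ocost_def)

lemma dst_cost:
  assumes "dst_run I x res n" "wf_inst I" "terms I \<noteq> {}" "card (terms I) \<le> 2^l"
    "\<exists>F. feasible I F" "real (optv I) \<le> x"
  shows "\<exists>F. res = Some F \<and> real (setcost I F) \<le> (8 * (real (card (roots I)) + real l) + 1) * real (optv I)"
  using assms
proof (induction arbitrary: l rule: dst_run.induct)
  case (infeas x I)
  have o1: "1 \<le> optv I" using opt_pos[OF infeas(2) infeas(5) infeas(3)] .
  have "\<forall>t\<in>terms I. dist I (roots I) t \<le> ereal x"
  proof
    fix t assume "t \<in> terms I"
    then have "dist I (roots I) t \<le> ereal (real (optv I))" using dist_le_opt[OF infeas(2) infeas(5)] by blast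
    also have "\<dots> \<le> ereal x" using infeas(6) by simp
    finally show "dist I (roots I) t \<le> ereal x" .
  qed
  moreover have "\<not> x < 1" using o1 infeas(6) by linarith
  ultimately show ?case using infeas(1) by (meson linorder_not_le)
next
  case (single x I t r p)
  have fin: "finite (iE I)" using single(7) unfolding wf_inst_def by blast
  obtain Fo where Fo: "feasible I Fo" "setcost I Fo = optv I" using opt_exists[OF fin single(10)] by blast
  have tt: "t \<in> terms I" using single(3) by simp
  obtain r' q where rq: "r' \<in> roots I" "walk (tail I) (head I) (iE I) r' q t" "pcost I q \<le> setcost I Fo"
    using feasible_walk[OF fin Fo(1) tt] by blast
  have "setcost I (set p) \<le> pcost I p" unfolding setcost_def pcost_def by (rule sum_set_le_sum_list)
  also have "\<dots> \<le> pcost I q" using single(6) rq(1,2) by blast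
  finally have "setcost I (set p) \<le> optv I" using rq(3) Fo(2) by simp
  then have "real (setcost I (set p)) \<le> 1 * real (optv I)" by simp
  also have "\<dots> \<le> (8 * (real (card (roots I)) + real l) + 1) * real (optv I)"
    by (intro mult_right_mono) auto
  finally show ?case by blast
next
  case (recur x I res1 n1 I' A P Fs Te Vt Cs rT resC nC res2 res)
  note h = recur
  let ?R = "real (card (roots I))" and ?O = "real (optv I)"
  let ?bound = "(8 * (?R + real l) + 1) * ?O"
  show ?case
  proof (cases "?O \<le> x / 2")
    case True
    obtain F1 where F1: "res1 = Some F1" "real (setcost I F1) \<le> ?bound"
      using h(15)[OF h(17) h(18) h(19) h(20) True] by blast
    have "ocost I res \<le> ocost I (Some F1)" using h(13) F1(1) by simp
    then obtain F where F: "res = Some F" "setcost I F \<le> setcost I F1" using ocost_le_Some by blast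
    then show ?thesis using F1(2) by (intro exI[of _ F]) simp
  next
    case False
    then have x2: "x < 2 * ?O" by linarith
    have wf: "wf_inst I" by (rule h(17))
    have finE: "finite (iE I)" and finV: "finite (iV I)" using wf unfolding wf_inst_def by blast+
    have rV: "roots I \<subseteq> iV I" and tV: "terms I \<subseteq> iV I - roots I" using wf unfolding wf_inst_def by blast+
    have tI': "tail I' = tail I" "head I' = head I" "cost I' = cost I" using h(5) by (simp_all add: restrict_simps)
    have EI: "iE I' \<subseteq> iE I" using h(5) restrict_sub(1) by simp
    have RI: "roots I' \<subseteq> roots I" using h(5) restrict_sub(2) by simp
    have VI: "iV I' \<subseteq> iV I" using h(5) by (auto simp: restrict_simps)
    have EV: "\<forall>e\<in>iE I'. tail I' e \<in> iV I' \<and> head I' e \<in> iV I'"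
      using h(5) by (auto simp: restrict_simps inner_edges_def)
    have termsI': "terms I' = terms I" using h(2) tV h(5) by (auto simp: restrict_simps)
    have x0: "0 \<le> x" using h(1) by linarith
    have rootsW: "r \<in> iV I'" if "r \<in> roots I" for r
    proof -
      have "dist I (roots I) r \<le> ereal 0" using dist_le[OF that, of I "[]" r] by simp
      then have "dist I (roots I) r \<le> ereal x" using x0 by (meson ereal_less_eq(3) order_trans)
      then show ?thesis using that rV h(5) by (auto simp: restrict_simps)
    qed
    have rootsI': "roots I' = roots I \<inter> iV I'" using h(5) by (auto simp: restrict_simps)
    obtain Fo where Fo: "feasible I Fo" "setcost I Fo = optv I" using opt_exists[OF finE h(20)] by blast
    have FoE: "Fo \<subseteq> iE I" using Fo(1) unfolding feasible_def by blast
    have "card (terms I) \<noteq> 0" using h(18) finV tV by (metis card_0_eq finite_Diff finite_subset)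
    then have N2: "2 \<le> card (terms I)" using h(3) by linarith
    obtain l' where l': "l = Suc l'"
    proof (cases l)
      case 0 then show ?thesis using h(19) N2 by simp
    next
      case (Suc m) then show ?thesis using that by blast
    qed
    have gs3: "\<forall>C\<in>comps I' (iV I' - Vt). 2 * card (C \<inter> terms I') \<le> card (terms I')"
      using gs_parts3[OF h(7)] h(9) by simp
    have CsC: "Cs \<subseteq> comps I' (iV I' - Vt)" using h(10) by blast
    have finCs: "finite Cs"
    proof (rule finite_subset)
      show "Cs \<subseteq> Pow (iV I')" using CsC comps_sub by blast
      show "finite (Pow (iV I'))" using finV VI by (meson finite_Pow_iff finite_subset)
    qed
    have CV: "C \<inter> Vt = {}" if "C \<in> Cs" for C using comps_sub CsC that by blast
    define U where "U = {r \<in> roots I'. P r \<noteq> {}}"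
    have UVt: "U \<subseteq> Vt" unfolding U_def h(9) T_verts_def by auto
    have finR: "finite (roots I)" using rV finV by (rule finite_subset)
    have Rcount: "real (card (roots I' \<inter> C)) + real (card U) \<le> ?R" if C: "C \<in> Cs" for C
    proof -
      have "card (roots I' \<inter> C) + card U = card ((roots I' \<inter> C) \<union> U)"
        using CV[OF C] UVt finR RI by (intro card_Un_disjoint[symmetric]) (auto intro: finite_subset simp: U_def)
      also have "\<dots> \<le> card (roots I)" using finR RI by (intro card_mono) (auto simp: U_def)
      finally show ?thesis by linarith
    qed
    define Fc where "Fc C = {e \<in> Fo \<inter> iE I'. tail I' e \<in> C \<union> Vt \<and> head I' e \<in> C \<union> Vt \<and> (tail I' e \<in> C \<or> head I' e \<in> C)}" for C
    have subwf: "wf_inst (contract_sub I' Vt C (rT C))" if C: "C \<in> Cs" for C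
    proof -
      have rTC: "rT C \<notin> C" using h(16) C by blast
      have CVI: "C \<subseteq> iV I" using comps_sub CsC C VI by blast
      have "terms I' \<inter> C \<inter> roots I' = {}" using tV RI termsI' by blast
      moreover have "\<forall>e\<in>iE I'. 0 < cost I' e" using EI wf tI'(3) unfolding wf_inst_def by auto
      ultimately show ?thesis unfolding wf_inst_def using finV CVI finE EI rTC wf
        by (auto simp: contract_simps wf_inst_def intro: finite_subset)
    qed
    have subfeas: "feasible (contract_sub I' Vt C (rT C)) (Fc C)" if C: "C \<in> Cs" for C
    proof -
      let ?S = "contract_sub I' Vt C (rT C)"
      have CC: "C \<in> comps I' (iV I' - Vt)" using CsC C by blast
      have "Fc C \<subseteq> iE ?S" unfolding Fc_def by (auto simp: contract_simps)
      moreover have "\<exists>r\<in>roots ?S. \<exists>p. walk (tail ?S) (head ?S) (Fc C) r p t" if t: "t \<in> terms ?S" for t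
      proof -
        have tC: "t \<in> C" and tT: "t \<in> terms I" using t termsI' by (auto simp: contract_simps)
        obtain r q where rq: "r \<in> roots I" "walk (tail I) (head I) (iE I) r q t" "set q \<subseteq> Fo" "pcost I q \<le> setcost I Fo"
          using feasible_walk[OF finE Fo(1) tT] by blast
        have "real (pcost I [] + pcost I q) \<le> x" using rq(4) Fo(2) h(21) by simp
        then have "walk (tail I) (head I) (iE (restrict_dist I x)) r q t"
          using restrict_walk[OF wf rq(1) _ rq(2), of "[]"] rq(1) rV by auto
        then have w0: "walk (tail I) (head I) (iE I') r q t" using h(5) by simp
        have sqE: "set q \<subseteq> iE I'" using walk_set[OF w0] .
        have w: "walk (tail I') (head I') (Fo \<inter> iE I') r q t"
          using walk_subset[OF w0, of "Fo \<inter> iE I'"] sqE rq(3) tI' by auto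
        have tnV: "t \<notin> Vt" using tC CV[OF C] by blast
        have hY: "\<forall>e\<in>set q. head I' e \<in> iV I' - Vt" if "\<forall>e\<in>set q. head I' e \<notin> Vt" using that EV sqE by blast
        have SE: "Fo \<inter> iE I' \<subseteq> iE I'" by blast
        from walk_split_last[OF w tnV] show ?thesis
        proof
          assume a: "r \<notin> Vt \<and> (\<forall>e\<in>set q. head I' e \<notin> Vt)"
          have hq: "\<forall>e\<in>set q. head I' e \<in> iV I' - Vt" using hY a by blast
          have rY: "r \<in> iV I' - Vt" using rootsW[OF rq(1)] a by blast
          have ic: "(\<forall>e\<in>set q. head I' e \<in> C) \<and> (r \<in> iV I' - Vt \<longrightarrow> r \<in> C)"
            by (rule walk_in_comp[OF CC w SE tC hq])
          then have rC: "r \<in> C" using rY by blast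
          have lw: "walk (\<lambda>e. if tail I' e \<in> Vt then rT C else tail I' e) (\<lambda>e. if head I' e \<in> Vt then rT C else head I' e)
             (Fc C) (if r \<in> Vt then rT C else r) q t"
            unfolding Fc_def using lower_walk[OF w conjunct1[OF ic] CV[OF C] _ tC, of "rT C"] rC by simp
          have "r \<in> roots ?S" using rC rq(1) rootsW[OF rq(1)] rootsI' by (simp add: contract_simps)
          moreover have "walk (tail ?S) (head ?S) (Fc C) r q t" using lw a by (simp add: contract_simps)
          ultimately show ?thesis by blast
        next
          assume "\<exists>p1 p2 u. q = p1 @ p2 \<and> u \<in> Vt \<and> walk (tail I') (head I') (Fo \<inter> iE I') r p1 u \<and>
               walk (tail I') (head I') (Fo \<inter> iE I') u p2 t \<and> (\<forall>e\<in>set p2. head I' e \<notin> Vt)"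
          then obtain p1 p2 u where pu: "q = p1 @ p2" "u \<in> Vt" "walk (tail I') (head I') (Fo \<inter> iE I') u p2 t"
             "\<forall>e\<in>set p2. head I' e \<notin> Vt" by blast
          have hq: "\<forall>e\<in>set p2. head I' e \<in> iV I' - Vt" using pu(1,4) EV sqE by auto
          have ic: "(\<forall>e\<in>set p2. head I' e \<in> C) \<and> (u \<in> iV I' - Vt \<longrightarrow> u \<in> C)"
            by (rule walk_in_comp[OF CC pu(3) SE tC hq])
          have lw: "walk (\<lambda>e. if tail I' e \<in> Vt then rT C else tail I' e) (\<lambda>e. if head I' e \<in> Vt then rT C else head I' e)
             (Fc C) (if u \<in> Vt then rT C else u) p2 t"
            unfolding Fc_def using lower_walk[OF pu(3) conjunct1[OF ic] CV[OF C] _ tC, of "rT C"] pu(2) by simp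
          have "rT C \<in> roots ?S" by (simp add: contract_simps)
          moreover have "walk (tail ?S) (head ?S) (Fc C) (rT C) p2 t" using lw pu(2) by (simp add: contract_simps)
          ultimately show ?thesis by blast
        qed
      qed
      ultimately show ?thesis unfolding feasible_def by blast
    qed
    have sumFc: "(\<Sum>C\<in>Cs. setcost I (Fc C)) \<le> optv I"
    proof -
      have disj: "\<forall>C1\<in>Cs. \<forall>C2\<in>Cs. C1 \<noteq> C2 \<longrightarrow> Fc C1 \<inter> Fc C2 = {}"
      proof (intro ballI impI)
        fix C1 C2 assume c: "C1 \<in> Cs" "C2 \<in> Cs" "C1 \<noteq> C2"
        show "Fc C1 \<inter> Fc C2 = {}"
        proof (rule ccontr)
          assume "Fc C1 \<inter> Fc C2 \<noteq> {}"
          then obtain e where e: "e \<in> Fc C1" "e \<in> Fc C2" by blast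
          then obtain z where z: "z \<in> C1" "z \<in> C2 \<union> Vt" unfolding Fc_def by blast
          then have "z \<in> C2" using CV[OF c(1)] by blast
          then have "C1 = C2" using comps_disjoint[of C1 I' "iV I' - Vt" C2 z] z(1) c CsC by blast
          then show False using c(3) by simp
        qed
      qed
      have "(\<Sum>C\<in>Cs. setcost I (Fc C)) = setcost I (\<Union>C\<in>Cs. Fc C)"
        unfolding setcost_def using finCs disj finE FoE
        by (intro sum.UNION_disjoint[symmetric]) (auto simp: Fc_def intro: finite_subset)
      also have "\<dots> \<le> setcost I Fo"
        unfolding setcost_def using finE FoE by (intro sum_mono2) (auto simp: Fc_def intro: finite_subset)
      finally show ?thesis using Fo(2) by simp
    qed
    have optC: "optv (contract_sub I' Vt C (rT C)) \<le> setcost I (Fc C)" if C: "C \<in> Cs" for C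
    proof -
      have "finite (iE (contract_sub I' Vt C (rT C)))" using subwf[OF C] unfolding wf_inst_def by blast
      then have "optv (contract_sub I' Vt C (rT C)) \<le> setcost (contract_sub I' Vt C (rT C)) (Fc C)"
        using opt_le subfeas[OF C] by blast
      then show ?thesis using tI' by (simp add: setcost_def contract_simps)
    qed
    have optC2: "optv (contract_sub I' Vt C (rT C)) \<le> optv I" if C: "C \<in> Cs" for C
    proof -
      have "setcost I (Fc C) \<le> (\<Sum>C\<in>Cs. setcost I (Fc C))" using finCs C by (intro member_le_sum) auto
      then show ?thesis using optC[OF C] sumFc by linarith
    qed
    have resC: "\<exists>G. resC C = Some G \<and> real (setcost I G) \<le>
        (8 * (real (card (roots I' \<inter> C)) + 1 + real l') + 1) * real (optv (contract_sub I' Vt C (rT C)))"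
      if C: "C \<in> Cs" for C
    proof -
      let ?S = "contract_sub I' Vt C (rT C)"
      have ih: "rT C \<notin> C \<and> dst_run ?S x (resC C) (nC C) \<and>
       (wf_inst ?S \<longrightarrow> terms ?S \<noteq> {} \<longrightarrow>
        (\<forall>l. card (terms ?S) \<le> 2 ^ l \<longrightarrow> (\<exists>a. feasible ?S a) \<longrightarrow> real (optv ?S) \<le> x \<longrightarrow>
          (\<exists>F. resC C = Some F \<and> real (setcost ?S F) \<le> (8 * (real (card (roots ?S)) + real l) + 1) * real (optv ?S))))"
        by (rule bspec[OF h(16) C])
      have rTC: "rT C \<notin> C" using ih by blast
      have ne: "terms ?S \<noteq> {}" using C h(10) by (auto simp: contract_simps)
      have "2 * card (C \<inter> terms I') \<le> card (terms I')" using gs3 CsC C by blast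
      moreover have "card (terms I') \<le> 2^l" using termsI' h(19) by simp
      ultimately have cS: "card (terms ?S) \<le> 2^l'" using l' by (simp add: contract_simps Int_commute)
      have oS: "real (optv ?S) \<le> x" using optC2[OF C] h(21) by linarith
      obtain G where G: "resC C = Some G" "real (setcost ?S G) \<le> (8 * (real (card (roots ?S)) + real l') + 1) * real (optv ?S)"
        using ih subwf[OF C] ne cS subfeas[OF C] oS by blast
      have "card (roots ?S) = card (roots I' \<inter> C) + 1"
      proof -
        have "finite (roots I' \<inter> C)" using finR RI by (meson finite_Int finite_subset)
        then show ?thesis using rTC by (simp add: contract_simps)
      qed
      moreover have "setcost ?S G = setcost I G" using tI' by (simp add: setcost_def contract_simps)
      ultimately show ?thesis using G by (intro exI[of _ G]) (simp add: algebra_simps)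
    qed
    have allS: "\<forall>C\<in>Cs. resC C \<noteq> None" using resC by fastforce
    define G where "G = Te \<union> (\<Union>C\<in>Cs. the (resC C))"
    have r2: "res2 = Some G" using h(11) allS unfolding G_def by simp
    have TeI: "Te \<subseteq> iE I" using Te_sub[OF h(6) h(7)] h(8) EI by blast
    have GC: "real (setcost I (the (resC C))) \<le> (8 * (?R - real (card U) + real l) + 1) * real (optv (contract_sub I' Vt C (rT C)))"
      if C: "C \<in> Cs" for C
    proof -
      obtain G' where G': "resC C = Some G'" "real (setcost I G') \<le>
        (8 * (real (card (roots I' \<inter> C)) + 1 + real l') + 1) * real (optv (contract_sub I' Vt C (rT C)))"
        using resC[OF C] by blast
      have "(8 * (real (card (roots I' \<inter> C)) + 1 + real l') + 1) \<le> (8 * (?R - real (card U) + real l) + 1)"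
        using Rcount[OF C] l' by simp
      then have "(8 * (real (card (roots I' \<inter> C)) + 1 + real l') + 1) * real (optv (contract_sub I' Vt C (rT C)))
          \<le> (8 * (?R - real (card U) + real l) + 1) * real (optv (contract_sub I' Vt C (rT C)))"
        by (intro mult_right_mono) auto
      then show ?thesis using G' by simp
    qed
    have finGC: "\<forall>C\<in>Cs. finite (the (resC C))"
    proof
      fix C assume C: "C \<in> Cs"
      have "the (resC C) \<subseteq> iE (contract_sub I' Vt C (rT C))"
        using dst_sound[of "contract_sub I' Vt C (rT C)" x "resC C" "nC C" "the (resC C)"] h(16) C allS
        unfolding feasible_def by (auto simp: contract_simps)
      then show "finite (the (resC C))" using finE EI by (auto simp: contract_simps intro: finite_subset)
    qed
    have finTe: "finite Te" using TeI finE by (rule finite_subset)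
    have setG: "setcost I G \<le> setcost I Te + (\<Sum>C\<in>Cs. setcost I (the (resC C)))"
    proof -
      have fU: "finite (\<Union>C\<in>Cs. the (resC C))" using finGC finCs by blast
      have "setcost I G \<le> setcost I Te + setcost I (\<Union>C\<in>Cs. the (resC C))"
        unfolding G_def setcost_def using sum_Un_nat[OF finTe fU, of "cost I"] by linarith
      also have "setcost I (\<Union>C\<in>Cs. the (resC C)) \<le> (\<Sum>S\<in>(\<lambda>C. the (resC C)) ` Cs. setcost I S)"
        unfolding setcost_def using sum_Union_le_nat[of "(\<lambda>C. the (resC C)) ` Cs" "cost I"] finCs finGC by auto
      also have "\<dots> \<le> (\<Sum>C\<in>Cs. setcost I (the (resC C)))"
        using sum_image_le[of Cs "setcost I" "\<lambda>C. the (resC C)"] finCs by (simp add: o_def)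
      finally show ?thesis by simp
    qed
    have kR: "card U \<le> card (roots I)" using finR RI by (intro card_mono) (auto simp: U_def)
    have TeC: "real (setcost I Te) \<le> 4 * x * real (card U)"
      using Te_cost[OF wf h(5) h(6) h(7) x0] h(8) unfolding U_def by simp
    have sumO: "(\<Sum>C\<in>Cs. real (optv (contract_sub I' Vt C (rT C)))) \<le> ?O"
    proof -
      have "(\<Sum>C\<in>Cs. real (optv (contract_sub I' Vt C (rT C)))) \<le> (\<Sum>C\<in>Cs. real (setcost I (Fc C)))"
        using optC by (intro sum_mono) simp
      also have "\<dots> = real (\<Sum>C\<in>Cs. setcost I (Fc C))" by simp
      also have "\<dots> \<le> ?O" using sumFc by linarith
      finally show ?thesis .
    qed
    let ?c = "8 * (?R - real (card U) + real l) + 1"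
    have c0: "0 \<le> ?c" using kR by simp
    have "real (setcost I G) \<le> real (setcost I Te) + (\<Sum>C\<in>Cs. real (setcost I (the (resC C))))"
      using setG by (metis of_nat_add of_nat_le_iff of_nat_sum)
    also have "\<dots> \<le> 4 * x * real (card U) + (\<Sum>C\<in>Cs. ?c * real (optv (contract_sub I' Vt C (rT C))))"
      using TeC GC by (intro add_mono sum_mono) auto
    also have "\<dots> = 4 * x * real (card U) + ?c * (\<Sum>C\<in>Cs. real (optv (contract_sub I' Vt C (rT C))))"
      by (simp add: sum_distrib_left)
    also have "\<dots> \<le> 4 * x * real (card U) + ?c * ?O"
      using sumO c0 by (intro add_left_mono mult_left_mono) auto
    also have "\<dots> \<le> 8 * real (card U) * ?O + ?c * ?O"
    proof -
      have "4 * x * real (card U) \<le> 4 * (2 * ?O) * real (card U)"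
        using x2 by (intro mult_right_mono) auto
      then show ?thesis by simp
    qed
    also have "\<dots> = ?bound" by (simp add: algebra_simps)
    finally have Gb: "real (setcost I G) \<le> ?bound" .
    have "ocost I res \<le> ocost I (Some G)" using h(14) r2 by simp
    then obtain F where F: "res = Some F" "setcost I F \<le> setcost I G" using ocost_le_Some by blast
    then show ?thesis using Gb by (intro exI[of _ F]) simp
  qed
qed

theorem lemma6:
  fixes I :: "('v, 'e) inst" and optt :: real and l k :: nat
    and res :: "'e set option" and n :: nat
  assumes "wf_inst I"
    and "planar_inst I"
    and "terms I \<noteq> {}"
    and "card (terms I) \<le> 2 ^ l"
    and "optt \<le> 2 ^ k"
    and "\<exists>F. feasible I F"
    and "real (optv I) \<le> optt"
    and "dst_run I optt res n"
  shows "\<exists>F. res = Some F \<and> feasible I F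
           \<and> real (setcost I F) \<le> (8 * (real (card (roots I)) + real l) + 1) * real (optv I)
           \<and> n \<le> card (terms I) * 2 ^ (2 * l + k)"
proof -
  obtain F where F: "res = Some F" "real (setcost I F) \<le> (8 * (real (card (roots I)) + real l) + 1) * real (optv I)"
    using dst_cost[OF assms(8) assms(1) assms(3) assms(4) assms(6) assms(7)] by blast
  have tV: "terms I \<subseteq> iV I" and fT: "finite (terms I)" using assms(1) unfolding wf_inst_def
    by (auto intro: finite_subset)
  have "feasible I F" using dst_sound[OF assms(8) tV F(1)] .
  moreover have "n \<le> card (terms I) * 2 ^ (2 * l + k)" using dst_count[OF assms(8) fT assms(3) assms(4) assms(5)] .
  ultimately show ?thesis using F by blast
qed

end
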